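(* Fix an integer base $b\ge 2$ and let $\mathcal{D}_b=\{0,1,\dots,b-1\}$. The constant \[ c_{\mathrm{dead}}(b):=\sum_{S\subseteq \mathcal{D}_b} (-1)^{|S|}\prod_{p\ \text{prime}}\left(1-\frac{\nu_{p,b}(S)}{p^2}\right) \] is well defined (each infinite product converges) and positive, and for every real $X\ge 3$, \[ D_b(X)=c_{\mathrm{dead}}(b)\,X+O_b\!\left(\frac{X}{\sqrt{\log X}}\right), \] where the implied constant depends only on $b$.
   Context: A positive integer is square-free if it is not divisible by any perfect square $>1$. A positive integer $N$ is a base-$b$ dead end if $N$ is square-free and for every digit $d\in\{0,1,\dots,b-1\}$ the integer $bN+d$ is not square-free. $D_b(X):=\#\{1\le N\le X: N\text{ is a base-}b\text{ dead end}\}$. For a prime $p$ and $S\subseteq\{0,\dots,b-1\}$, $\nu_{p,b}(S):=\#\{n\bmod p^2:\ p^2\mid n\text{ or } p^2\mid(bn+d)\text{ for some } d\in S\}$. *)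

theory Defs
  imports "HOL-Analysis.Analysis" "HOL-Computational_Algebra.Squarefree"
begin

definition dead_end :: "nat \<Rightarrow> nat \<Rightarrow> bool" where
  "dead_end b N \<longleftrightarrow> squarefree N \<and> (\<forall>d<b. \<not> squarefree (b * N + d))"

definition D_count :: "nat \<Rightarrow> real \<Rightarrow> nat" where
  "D_count b X = card {N::nat. 1 \<le> N \<and> real N \<le> X \<and> dead_end b N}"

definition nu :: "nat \<Rightarrow> nat \<Rightarrow> nat set \<Rightarrow> nat" where
  "nu p b S = card {n \<in> {..<p^2}. p^2 dvd n \<or> (\<exists>d\<in>S. p^2 dvd (b * n + d))}"

text \<open>Euler factor at p (factor 1 at non-primes, so the product runs over primes).\<close>
definition dead_factor :: "nat \<Rightarrow> nat set \<Rightarrow> nat \<Rightarrow> real" where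
  "dead_factor b S p = (if prime p then 1 - real (nu p b S) / real (p^2) else 1)"

definition c_dead :: "nat \<Rightarrow> real" where
  "c_dead b = (\<Sum>S\<in>Pow {..<b}. (-1) ^ card S * (\<Prod>p. dead_factor b S p))"

end

theory Submission
  imports Defs "HOL-Number_Theory.Number_Theory" "HOL-Real_Asymp.Real_Asymp"
begin



lemma crt_bij:
  fixes m n :: nat assumes "coprime m n" "m > 0" "n > 0"
  shows "bij_betw (\<lambda>N. (N mod m, N mod n)) {..<m*n} ({..<m} \<times> {..<n})"
proof -
  have inj: "inj_on (\<lambda>N. (N mod m, N mod n)) {..<m*n}"
  proof (rule inj_onI)
    fix x y assume x: "x \<in> {..<m*n}" and y: "y \<in> {..<m*n}"
      and e: "(x mod m, x mod n) = (y mod m, y mod n)"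
    then have "[x = y] (mod m)" "[x = y] (mod n)" by (auto simp: cong_def)
    then have "[x = y] (mod m*n)" using assms(1) by (simp add: coprime_cong_mult_nat)
    then show "x = y" using x y by (simp add: cong_def)
  qed
  have sub: "(\<lambda>N. (N mod m, N mod n)) ` {..<m*n} \<subseteq> {..<m} \<times> {..<n}" using assms by auto
  have "card ((\<lambda>N. (N mod m, N mod n)) ` {..<m*n}) = card ({..<m} \<times> {..<n})"
    using card_image[OF inj] by (simp add: card_cartesian_product)
  then have "(\<lambda>N. (N mod m, N mod n)) ` {..<m*n} = {..<m} \<times> {..<n}"
    using sub by (intro card_subset_eq) auto
  then show ?thesis using inj by (simp add: bij_betw_def)
qed

lemma crt_count:
  fixes G :: "nat \<Rightarrow> nat set" and P :: "nat set"
  assumes "finite P" "\<forall>p\<in>P. prime p" "\<forall>p\<in>P. G p \<subseteq> {..<p^2}"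
  shows "card {N\<in>{..<(\<Prod>p\<in>P. p^2)}. \<forall>p\<in>P. N mod p^2 \<in> G p} = (\<Prod>p\<in>P. card (G p))"
  using assms
proof (induction P rule: finite_induct)
  case empty
  then show ?case by simp
next
  case (insert q P)
  define m where "m = q^2"
  define n where "n = (\<Prod>p\<in>P. p^2)"
  have qp: "prime q" using insert by auto
  have m0: "m > 0" using qp m_def prime_gt_0_nat by simp
  have n0: "n > 0" unfolding n_def using insert prime_gt_0_nat by (auto intro!: prod_pos)
  have cop: "coprime m n" unfolding m_def n_def
  proof (rule prod_coprime_right)
    fix p assume "p \<in> P"
    then have "prime p" "p \<noteq> q" using insert by auto
    then have "coprime q p" using qp by (simp add: primes_coprime)
    then show "coprime (q^2) (p^2)" by simp
  qed
  define h where "h = (\<lambda>N::nat. (N mod m, N mod n))"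
  have bij: "bij_betw h {..<m*n} ({..<m} \<times> {..<n})" unfolding h_def by (rule crt_bij[OF cop m0 n0])
  define A where "A = {N\<in>{..<m*n}. N mod m \<in> G q \<and> (\<forall>p\<in>P. N mod p^2 \<in> G p)}"
  define T where "T = {y\<in>{..<n}. \<forall>p\<in>P. y mod p^2 \<in> G p}"
  have red: "(\<forall>p\<in>P. N mod p^2 \<in> G p) \<longleftrightarrow> (\<forall>p\<in>P. (N mod n) mod p^2 \<in> G p)" for N
  proof -
    have "p \<in> P \<Longrightarrow> (N mod n) mod p^2 = N mod p^2" for p
      unfolding n_def using insert(1) by (intro mod_mod_cancel dvd_prodI) auto
    then show ?thesis by auto
  qed
  have img: "h ` A = G q \<times> T"
  proof
    show "h ` A \<subseteq> G q \<times> T" unfolding A_def T_def h_def using red n0 by auto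
  next
    show "G q \<times> T \<subseteq> h ` A"
    proof
      fix u assume u: "u \<in> G q \<times> T"
      have "G q \<subseteq> {..<m}" using insert m_def by auto
      then have "u \<in> {..<m} \<times> {..<n}" using u T_def by auto
      then obtain N where N: "N \<in> {..<m*n}" "h N = u" using bij by (metis bij_betw_imp_surj_on imageE)
      then have "N \<in> A" unfolding A_def using u red unfolding h_def T_def by auto
      then show "u \<in> h ` A" using N by auto
    qed
  qed
  have "inj_on h A" using bij unfolding A_def bij_betw_def by (rule inj_on_subset[OF conjunct1]) auto
  then have "card A = card (G q \<times> T)" using img card_image by fastforce
  also have "\<dots> = card (G q) * card T" by (simp add: card_cartesian_product)
  also have "card T = (\<Prod>p\<in>P. card (G p))" using insert unfolding T_def n_def by auto
  finally have "card A = card (G q) * (\<Prod>p\<in>P. card (G p))" .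
  moreover have prodeq: "(\<Prod>p\<in>insert q P. p^2) = m * n" using insert m_def n_def by simp
  moreover have "{N\<in>{..<(\<Prod>p\<in>insert q P. p^2)}. \<forall>p\<in>insert q P. N mod p^2 \<in> G p} = A"
    unfolding A_def m_def prodeq[unfolded m_def] by auto
  ultimately show ?case using insert(1,2) by simp
qed

lemma sum_split_shift:
  fixes h :: "nat \<Rightarrow> real"
  shows "(\<Sum>N<a+Q. h N) = (\<Sum>N<a. h N) + (\<Sum>i<Q. h (a+i))"
  by (induction Q) auto

lemma sum_shift_periodic:
  fixes h :: "nat \<Rightarrow> real"
  assumes "\<forall>N. h (N+Q) = h N"
  shows "(\<Sum>i<Q. h (a+i)) = (\<Sum>i<Q. h i)"
proof (induction a)
  case 0 then show ?case by simp
next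
  case (Suc a)
  show ?case
  proof (cases Q)
    case 0 then show ?thesis by simp
  next
    case (Suc Q')
    have 1: "(\<Sum>i<Q. h (a+i)) = h a + (\<Sum>i<Q'. h (Suc a + i))"
      unfolding Suc by (subst sum.lessThan_Suc_shift) simp
    have 2: "(\<Sum>i<Q. h (Suc a+i)) = (\<Sum>i<Q'. h (Suc a + i)) + h (Suc a + Q')"
      unfolding Suc by simp
    have "h (Suc a + Q') = h a" using assms Suc by (metis add_Suc_shift add_Suc_right)
    then show ?thesis using 1 2 Suc.IH by simp
  qed
qed

lemma periodic_bound:
  fixes h :: "nat \<Rightarrow> real"
  assumes Q: "Q > 0" and per: "\<forall>N. h (N+Q) = h N" and b: "\<forall>N. 0 \<le> h N \<and> h N \<le> 1"
  shows "\<bar>(\<Sum>N<M. h N) - real M * (\<Sum>N<Q. h N) / real Q\<bar> \<le> real Q"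
proof (induction M rule: less_induct)
  case (less M)
  have sb: "0 \<le> (\<Sum>N<k. h N) \<and> (\<Sum>N<k. h N) \<le> real k" for k
  proof
    show "0 \<le> (\<Sum>N<k. h N)" using b by (simp add: sum_nonneg)
    have "(\<Sum>N<k. h N) \<le> (\<Sum>N<k. 1)" using b by (intro sum_mono) auto
    then show "(\<Sum>N<k. h N) \<le> real k" by simp
  qed
  show ?case
  proof (cases "M < Q")
    case True
    have "0 \<le> real M * (\<Sum>N<Q. h N) / real Q" using sb[of Q] by simp
    moreover have "real M * (\<Sum>N<Q. h N) / real Q \<le> real M"
      using sb[of Q] Q by (simp add: divide_le_eq mult_left_mono mult.commute)
    ultimately show ?thesis using sb[of M] True by (simp add: abs_le_iff)
  next
    case False
    define a where "a = M - Q"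
    have M: "M = a + Q" using False a_def by simp
    have "(\<Sum>N<M. h N) = (\<Sum>N<a. h N) + (\<Sum>N<Q. h N)"
      unfolding M sum_split_shift using sum_shift_periodic[OF per] by simp
    moreover have "real M * (\<Sum>N<Q. h N) / real Q = real a * (\<Sum>N<Q. h N) / real Q + (\<Sum>N<Q. h N)"
      using Q unfolding M by (simp add: field_simps)
    moreover have "a < M" using Q M by simp
    ultimately show ?thesis using less.IH[of a] by simp
  qed
qed

lemma inv_sq_sum_aux:
  assumes "z \<ge> 1" "Y \<ge> z"
  shows "(\<Sum>n\<in>{z<..Y}. 1 / real n ^ 2) \<le> 1 / real z - 1 / real Y"
  using assms(2)
proof (induction Y rule: dec_induct)
  case base then show ?case by simp
next
  case (step Y)
  have Y1: "real Y \<ge> 1" using step assms by simp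
  have "{z<..Suc Y} = insert (Suc Y) {z<..Y}" using step by auto
  then have "(\<Sum>n\<in>{z<..Suc Y}. 1 / real n ^ 2) = 1 / real (Suc Y) ^ 2 + (\<Sum>n\<in>{z<..Y}. 1 / real n ^ 2)"
    by simp
  also have "\<dots> \<le> 1 / real (Suc Y) ^ 2 + (1 / real z - 1 / real Y)" using step by simp
  also have "\<dots> \<le> 1 / real z - 1 / real (Suc Y)"
  proof -
    have "1 / real (Suc Y) ^ 2 \<le> 1 / (real Y * real (Suc Y))"
      using Y1 by (intro divide_left_mono) (auto simp: power2_eq_square)
    also have "1 / (real Y * real (Suc Y)) = 1 / real Y - 1 / real (Suc Y)"
      using Y1 by (simp add: field_simps)
    finally have "1 / real (Suc Y) ^ 2 \<le> 1 / real Y - 1 / real (Suc Y)" .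
    then show ?thesis by simp
  qed
  finally show ?case .
qed

lemma inv_sq_sum:
  assumes "z \<ge> 1"
  shows "(\<Sum>n\<in>{z<..Y}. 1 / real n ^ 2) \<le> 1 / real z"
proof (cases "Y \<ge> z")
  case True
  have "0 \<le> 1 / real Y" by simp
  then show ?thesis using inv_sq_sum_aux[OF assms True] by linarith
next
  case False
  then have "{z<..Y} = {}" by auto
  then show ?thesis by simp
qed

lemma weier:
  fixes e :: "nat \<Rightarrow> real"
  assumes "finite A" "\<forall>i\<in>A. 0 \<le> e i \<and> e i \<le> 1"
  shows "1 - (\<Sum>i\<in>A. e i) \<le> (\<Prod>i\<in>A. 1 - e i)"
  using assms
proof (induction A rule: finite_induct)
  case empty then show ?case by simp
next
  case (insert x A)
  have ex: "0 \<le> e x" "e x \<le> 1" using insert by auto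
  have IH: "1 - (\<Sum>i\<in>A. e i) \<le> (\<Prod>i\<in>A. 1 - e i)" using insert by auto
  have s0: "0 \<le> (\<Sum>i\<in>A. e i)" using insert by (auto intro: sum_nonneg)
  have "(1 - e x) * (1 - (\<Sum>i\<in>A. e i)) \<le> (1 - e x) * (\<Prod>i\<in>A. 1 - e i)"
    using IH ex by (intro mult_left_mono) auto
  moreover have "1 - (e x + (\<Sum>i\<in>A. e i)) \<le> (1 - e x) * (1 - (\<Sum>i\<in>A. e i))"
    using ex s0 by (simp add: algebra_simps)
  ultimately show ?case using insert by simp
qed

lemma res_count:
  fixes m :: nat assumes "m > 0"
  shows "real (card {N\<in>{1..M}. N mod m = r}) \<le> real M / real m + 1"
proof -
  have inj: "inj_on (\<lambda>N. N div m) {N\<in>{1..M}. N mod m = r}"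
  proof (rule inj_onI)
    fix x y assume x: "x \<in> {N\<in>{1..M}. N mod m = r}" and y: "y \<in> {N\<in>{1..M}. N mod m = r}"
      and e: "x div m = y div m"
    have "x mod m = y mod m" using x y by simp
    then have "x div m * m + x mod m = y div m * m + y mod m" using e by simp
    then show "x = y" by simp
  qed
  have "(\<lambda>N. N div m) ` {N\<in>{1..M}. N mod m = r} \<subseteq> {..M div m}"
  proof
    fix u assume "u \<in> (\<lambda>N. N div m) ` {N\<in>{1..M}. N mod m = r}"
    then obtain N where "N \<le> M" "u = N div m" by auto
    then show "u \<in> {..M div m}" by (simp add: div_le_mono)
  qed
  then have "card {N\<in>{1..M}. N mod m = r} \<le> card {..M div m}"
    using card_inj_on_le[OF inj] by blast
  then have "real (card {N\<in>{1..M}. N mod m = r}) \<le> real (M div m) + 1" by simp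
  also have "real (M div m) \<le> real M / real m" by (simp add: of_nat_div_le_of_nat)
  finally show ?thesis by simp
qed



locale sieve =
  fixes G :: "nat \<Rightarrow> nat set" and K P0 B D :: nat
  assumes G_sub: "\<And>p. prime p \<Longrightarrow> G p \<subseteq> {..<p^2}"
    and bad_card: "\<And>p. prime p \<Longrightarrow> P0 < p \<Longrightarrow> card ({..<p^2} - G p) \<le> K"
    and bad_large: "\<And>p N. prime p \<Longrightarrow> P0 < p \<Longrightarrow> 1 \<le> N \<Longrightarrow> N mod p^2 \<notin> G p \<Longrightarrow> p^2 \<le> B*N + D"
begin

definition f :: "nat \<Rightarrow> real" where "f p = (if prime p then real (card (G p)) / real (p^2) else 1)"
definition good :: "nat \<Rightarrow> bool" where "good N \<longleftrightarrow> (\<forall>p. prime p \<longrightarrow> N mod p^2 \<in> G p)"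
definition goodz :: "nat \<Rightarrow> nat \<Rightarrow> bool" where "goodz z N \<longleftrightarrow> (\<forall>p. prime p \<and> p \<le> z \<longrightarrow> N mod p^2 \<in> G p)"
definition cnt :: "real \<Rightarrow> nat" where "cnt X = card {N::nat. 1 \<le> N \<and> real N \<le> X \<and> good N}"
definition Pz :: "nat \<Rightarrow> nat set" where "Pz z = {p. prime p \<and> p \<le> z}"
definition Qz :: "nat \<Rightarrow> nat" where "Qz z = (\<Prod>p\<in>Pz z. p^2)"
definition F :: "nat \<Rightarrow> real" where "F z = (\<Prod>i\<le>z. f i)"

lemma finite_Pz: "finite (Pz z)" unfolding Pz_def by auto

lemma card_G_le: "prime p \<Longrightarrow> card (G p) \<le> p^2"
  using card_mono[OF finite_lessThan G_sub] by fastforce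

lemma f_nonneg: "0 \<le> f p" unfolding f_def by auto

lemma f_le1: "f p \<le> 1"
proof (cases "prime p")
  case True
  then have "real (card (G p)) \<le> real (p^2)" using card_G_le by (simp del: of_nat_power)
  moreover have "real (p^2) > 0" using True prime_gt_0_nat by simp
  ultimately show ?thesis using True unfolding f_def by (simp add: divide_le_eq_1 del: of_nat_power)
qed (simp add: f_def)

lemma f_close: assumes "P0 < p" shows "1 - f p \<le> real K / real p ^ 2"
proof (cases "prime p")
  case True
  have sub: "G p \<subseteq> {..<p^2}" using G_sub True .
  have cd: "card ({..<p^2} - G p) = p^2 - card (G p)"
    using card_Diff_subset[OF finite_subset[OF sub finite_lessThan] sub] by simp
  have le: "card (G p) \<le> p^2" using card_G_le True .
  have pos: "real p ^ 2 > 0" using True prime_gt_0_nat by simp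
  have "1 - f p = (real p ^ 2 - real (card (G p))) / real p ^ 2"
    using True pos unfolding f_def by (simp add: field_simps)
  also have "real p ^ 2 - real (card (G p)) = real (card ({..<p^2} - G p))"
    using cd le by (simp add: of_nat_diff)
  also have "\<dots> \<le> real K" using bad_card[OF True assms] by simp
  finally show ?thesis using pos by (simp add: divide_right_mono)
qed (simp add: f_def)

lemma conv: "convergent_prod f"
proof (rule abs_convergent_prod_imp_convergent_prod)
  show "abs_convergent_prod f" unfolding abs_convergent_prod_conv_summable
  proof (rule summable_comparison_test')
    show "summable (\<lambda>n. real K * inverse (real n ^ 2))"
      by (intro summable_mult inverse_power_summable) simp
    fix n assume "Suc P0 \<le> n"
    then have "1 - f n \<le> real K / real n ^ 2" using f_close by simp
    then show "norm (norm (f n - 1)) \<le> real K * inverse (real n ^ 2)"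
      using f_le1[of n] by (simp add: field_simps)
  qed
qed

lemma F_nonneg: "0 \<le> F z" unfolding F_def using f_nonneg by (simp add: prod_nonneg)
lemma F_le1: "F z \<le> 1" unfolding F_def using f_nonneg f_le1 by (simp add: prod_le_1)

lemma F_split: assumes "z \<le> w" shows "F w = F z * (\<Prod>i\<in>{z<..w}. f i)"
proof -
  have "{..w} = {..z} \<union> {z<..w}" using assms by auto
  then show ?thesis unfolding F_def by (simp add: prod.union_disjoint ivl_disj_int)
qed

lemma tail_prod:
  assumes "max P0 1 \<le> z"
  shows "1 - real K / real z \<le> (\<Prod>i\<in>{z<..w}. f i)"
proof -
  have "1 - (\<Sum>i\<in>{z<..w}. 1 - f i) \<le> (\<Prod>i\<in>{z<..w}. 1 - (1 - f i))"
    by (rule weier) (use f_nonneg f_le1 in auto)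
  moreover have "(\<Sum>i\<in>{z<..w}. 1 - f i) \<le> (\<Sum>i\<in>{z<..w}. real K * (1 / real i ^ 2))"
  proof (rule sum_mono)
    fix i assume "i \<in> {z<..w}"
    then have "P0 < i" using assms by auto
    then show "1 - f i \<le> real K * (1 / real i ^ 2)" using f_close by simp
  qed
  moreover have "(\<Sum>i\<in>{z<..w}. real K * (1 / real i ^ 2)) \<le> real K / real z"
    using inv_sq_sum[of z w] assms by (simp add: sum_distrib_left[symmetric] mult_left_mono divide_inverse)
  ultimately show ?thesis by simp
qed

lemma F_lim: "F \<longlonglongrightarrow> prodinf f"
  using convergent_prod_LIMSEQ[OF conv] unfolding F_def .

lemma P_nonneg: "0 \<le> prodinf f"
  by (rule LIMSEQ_le_const[OF F_lim]) (use F_nonneg in auto)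

lemma P_le1: "prodinf f \<le> 1"
  by (rule LIMSEQ_le_const2[OF F_lim]) (use F_le1 in auto)

lemma P_close:
  assumes "max P0 1 \<le> z"
  shows "\<bar>prodinf f - F z\<bar> \<le> real K / real z"
proof -
  have lo: "F z * (1 - real K / real z) \<le> prodinf f"
  proof (rule LIMSEQ_le_const[OF F_lim], intro exI allI impI)
    fix w assume "z \<le> w"
    then show "F z * (1 - real K / real z) \<le> F w"
      using F_split tail_prod[OF assms, of w] F_nonneg[of z] by (simp add: mult_left_mono)
  qed
  have hi: "prodinf f \<le> F z"
  proof (rule LIMSEQ_le_const2[OF F_lim], intro exI allI impI)
    fix w assume "z \<le> w"
    have "(\<Prod>i\<in>{z<..w}. f i) \<le> 1" using f_nonneg f_le1 by (simp add: prod_le_1)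
    then show "F w \<le> F z"
      using F_split[OF \<open>z \<le> w\<close>] F_nonneg[of z] by (simp add: mult_left_le)
  qed
  have "F z * (real K / real z) \<le> real K / real z"
    using mult_right_mono[OF F_le1[of z], of "real K / real z"] by simp
  then show ?thesis using lo hi by (simp add: algebra_simps abs_le_iff)
qed


lemma F_eq: "F z = real (\<Prod>p\<in>Pz z. card (G p)) / real (Qz z)"
proof -
  have "F z = (\<Prod>i\<in>Pz z. f i)"
    unfolding F_def by (rule prod.mono_neutral_right) (auto simp: Pz_def f_def)
  also have "\<dots> = (\<Prod>p\<in>Pz z. real (card (G p)) / real (p^2))"
    by (rule prod.cong) (auto simp: Pz_def f_def)
  also have "\<dots> = real (\<Prod>p\<in>Pz z. card (G p)) / real (Qz z)"
    unfolding Qz_def by (simp add: prod_dividef del: of_nat_power)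
  finally show ?thesis .
qed

lemma Qz_pos: "0 < Qz z"
  unfolding Qz_def Pz_def using prime_gt_0_nat by (auto intro!: prod_pos)

lemma Qz_le: assumes "1 \<le> z" shows "real (Qz z) \<le> real z ^ (2*z)"
proof -
  have "real (Qz z) = (\<Prod>p\<in>Pz z. real p ^ 2)" unfolding Qz_def by simp
  also have "\<dots> \<le> (real z ^ 2) ^ z"
  proof (rule prod_le_power)
    show "\<And>i. i \<in> Pz z \<Longrightarrow> 0 \<le> real i ^ 2 \<and> real i ^ 2 \<le> real z ^ 2"
      unfolding Pz_def by (auto intro: power_mono)
    have "Pz z \<subseteq> {1..z}" unfolding Pz_def using prime_ge_1_nat by auto
    then show "card (Pz z) \<le> z" using card_mono[of "{1..z}" "Pz z"] by simp
    show "1 \<le> real z ^ 2" using assms by simp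
  qed
  finally show ?thesis by (simp add: power_mult)
qed

lemma goodz_Pz: "goodz z N \<longleftrightarrow> (\<forall>p\<in>Pz z. N mod p^2 \<in> G p)"
  unfolding goodz_def Pz_def by auto

lemma goodz_periodic: "goodz z (N + Qz z) = goodz z N"
proof -
  have "p \<in> Pz z \<Longrightarrow> (N + Qz z) mod p^2 = N mod p^2" for p
  proof -
    assume "p \<in> Pz z"
    then have "p^2 dvd Qz z" unfolding Qz_def using finite_Pz by (intro dvd_prodI) auto
    then obtain k where "Qz z = p^2 * k" by auto
    then show ?thesis by simp
  qed
  then show ?thesis unfolding goodz_Pz by auto
qed

lemma goodz_period_count: "card {N\<in>{..<Qz z}. goodz z N} = (\<Prod>p\<in>Pz z. card (G p))"
  unfolding goodz_Pz Qz_def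
  by (rule crt_count) (use finite_Pz G_sub in \<open>auto simp: Pz_def\<close>)

lemma sum_ind: "finite A \<Longrightarrow> (\<Sum>N\<in>A. if Pr N then (1::real) else 0) = real (card {N\<in>A. Pr N})"
  by (simp add: sum.inter_filter[symmetric])

lemma goodz_count_bound:
  "\<bar>real (card {N\<in>{..<M}. goodz z N}) - real M * F z\<bar> \<le> real (Qz z)"
proof -
  define h where "h = (\<lambda>N. if goodz z N then (1::real) else 0)"
  have "\<bar>(\<Sum>N<M. h N) - real M * (\<Sum>N<Qz z. h N) / real (Qz z)\<bar> \<le> real (Qz z)"
    by (rule periodic_bound) (use Qz_pos goodz_periodic in \<open>auto simp: h_def\<close>)
  moreover have "(\<Sum>N<M. h N) = real (card {N\<in>{..<M}. goodz z N})"
    unfolding h_def by (rule sum_ind) simp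
  moreover have "(\<Sum>N<Qz z. h N) = real (card {N\<in>{..<Qz z}. goodz z N})"
    unfolding h_def by (rule sum_ind) simp
  moreover have "real (card {N\<in>{..<Qz z}. goodz z N}) = real (\<Prod>p\<in>Pz z. card (G p))"
    by (simp only: goodz_period_count)
  ultimately show ?thesis by (simp add: F_eq)
qed


lemma tail_count:
  assumes z: "max P0 1 \<le> z"
  shows "real (card {N\<in>{1..M}. goodz z N}) - real (card {N\<in>{1..M}. good N})
     \<le> real K * real M / real z + real K * sqrt (real (B*M + D))"
proof -
  define A where "A = {N\<in>{1..M}. goodz z N}"
  define A' where "A' = {N\<in>{1..M}. good N}"
  define T where "T = B*M + D"
  define Y where "Y = nat \<lfloor>sqrt (real T)\<rfloor>"
  define I where "I = {p. prime p \<and> z < p \<and> p \<le> Y}"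
  define E where "E = (\<lambda>p. {N\<in>{1..M}. N mod p^2 \<notin> G p})"
  have sub: "A' \<subseteq> A" unfolding A_def A'_def good_def goodz_def by auto
  have fin: "finite A" unfolding A_def by auto
  have d1: "real (card A) - real (card A') = real (card (A - A'))"
    using card_Diff_subset[OF finite_subset[OF sub fin] sub] card_mono[OF fin sub] by (simp add: of_nat_diff)
  have AE: "A - A' \<subseteq> (\<Union>p\<in>I. E p)"
  proof
    fix N assume N: "N \<in> A - A'"
    then obtain p where p: "prime p" "N mod p^2 \<notin> G p" unfolding A_def A'_def good_def by auto
    have N1: "1 \<le> N" "N \<le> M" using N A_def by auto
    have "\<not> p \<le> z" using N p unfolding A_def goodz_def by auto
    then have zp: "z < p" by simp
    then have "P0 < p" using z by simp
    then have "p^2 \<le> B*N + D" using bad_large p N1 by auto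
    also have "\<dots> \<le> T" unfolding T_def using N1 by simp
    finally have "real p ^ 2 \<le> real T" by (metis of_nat_le_iff of_nat_power)
    then have "real p \<le> sqrt (real T)" by (rule real_le_rsqrt)
    then have "p \<le> Y" unfolding Y_def by (rule le_nat_floor)
    then show "N \<in> (\<Union>p\<in>I. E p)" using p zp N1 unfolding I_def E_def by auto
  qed
  have finI: "finite I" unfolding I_def by auto
  have "card (A - A') \<le> card (\<Union>p\<in>I. E p)"
    by (rule card_mono[OF _ AE]) (use finI in \<open>auto simp: E_def\<close>)
  also have "\<dots> \<le> (\<Sum>p\<in>I. card (E p))" by (rule card_UN_le[OF finI])
  finally have c1: "real (card (A - A')) \<le> (\<Sum>p\<in>I. real (card (E p)))"
    by (metis of_nat_le_iff of_nat_sum)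
  have c2: "(\<Sum>p\<in>I. real (card (E p))) \<le> (\<Sum>p\<in>I. real K * (real M / real p^2 + 1))"
  proof (rule sum_mono)
    fix p assume "p \<in> I"
    then have p: "prime p" "P0 < p" using z I_def by auto
    have pp: "0 < p^2" using p prime_gt_0_nat by simp
    have "E p = (\<Union>r\<in>{..<p^2} - G p. {N\<in>{1..M}. N mod p^2 = r})"
      unfolding E_def using pp by auto
    then have "card (E p) \<le> (\<Sum>r\<in>{..<p^2} - G p. card {N\<in>{1..M}. N mod p^2 = r})"
      using card_UN_le[of "{..<p^2} - G p" "\<lambda>r. {N\<in>{1..M}. N mod p^2 = r}"] by simp
    then have "real (card (E p)) \<le> (\<Sum>r\<in>{..<p^2} - G p. real (card {N\<in>{1..M}. N mod p^2 = r}))"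
      by (metis of_nat_le_iff of_nat_sum)
    also have "\<dots> \<le> (\<Sum>r\<in>{..<p^2} - G p. real M / real p^2 + 1)"
      by (rule sum_mono) (use res_count[OF pp, of M] in simp)
    also have "\<dots> = real (card ({..<p^2} - G p)) * (real M / real p^2 + 1)" by simp
    also have "\<dots> \<le> real K * (real M / real p^2 + 1)"
      using bad_card[OF p] by (intro mult_right_mono) auto
    finally show "real (card (E p)) \<le> real K * (real M / real p^2 + 1)" .
  qed
  have c3: "(\<Sum>p\<in>I. real K * (real M / real p^2 + 1)) \<le> (\<Sum>p\<in>{z<..Y}. real K * (real M / real p^2 + 1))"
    by (rule sum_mono2) (auto simp: I_def)
  have c4: "(\<Sum>p\<in>{z<..Y}. real K * (real M / real p^2 + 1))
      = real K * real M * (\<Sum>p\<in>{z<..Y}. 1 / real p^2) + real K * real (card {z<..Y})"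
    by (simp add: ring_distribs sum.distrib sum_distrib_left)
  have c5: "real K * real M * (\<Sum>p\<in>{z<..Y}. 1 / real p^2) \<le> real K * real M * (1 / real z)"
    using inv_sq_sum[of z Y] z by (intro mult_left_mono) auto
  have "real (card {z<..Y}) \<le> real Y" by simp
  also have "real Y \<le> sqrt (real T)" unfolding Y_def by (rule of_nat_floor) simp
  finally have c6: "real K * real (card {z<..Y}) \<le> real K * sqrt (real T)" by (intro mult_left_mono) auto
  show ?thesis using d1 c1 c2 c3 c4 c5 c6 unfolding A_def A'_def T_def by simp
qed

lemma cnt_eq: assumes "0 \<le> X" shows "cnt X = card {N\<in>{1..nat \<lfloor>X\<rfloor>}. good N}"
proof -
  have "real N \<le> X \<longleftrightarrow> N \<le> nat \<lfloor>X\<rfloor>" for N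
  proof
    assume "real N \<le> X" then show "N \<le> nat \<lfloor>X\<rfloor>" by (rule le_nat_floor)
  next
    assume "N \<le> nat \<lfloor>X\<rfloor>" then have "real N \<le> real (nat \<lfloor>X\<rfloor>)" by simp
    also have "\<dots> \<le> X" using assms by (rule of_nat_floor)
    finally show "real N \<le> X" .
  qed
  then show ?thesis unfolding cnt_def by (intro arg_cong[where f=card]) auto
qed

lemma cnt_le: assumes "0 \<le> X" shows "real (cnt X) \<le> X"
proof -
  have "cnt X \<le> card {1..nat \<lfloor>X\<rfloor>}" unfolding cnt_eq[OF assms] by (rule card_mono) auto
  then have "real (cnt X) \<le> real (nat \<lfloor>X\<rfloor>)" by simp
  also have "\<dots> \<le> X" using assms by (rule of_nat_floor)
  finally show ?thesis .
qed

lemma main_bound: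
  assumes X: "1 \<le> X" and z: "max P0 1 \<le> z"
  shows "\<bar>real (cnt X) - prodinf f * X\<bar> \<le> 2 + real (Qz z) + 2 * real K * X / real z + real K * sqrt (real B * X + real D)"
proof -
  define M where "M = nat \<lfloor>X\<rfloor>"
  have MX: "real M \<le> X" "X < real M + 1" unfolding M_def using X
    by (simp_all add: of_nat_floor)
  define c where "c = card {N\<in>{1..M}. good N}"
  define cz where "cz = card {N\<in>{1..M}. goodz z N}"
  define s where "s = card {N\<in>{..<Suc M}. goodz z N}"
  have cc: "cnt X = c" unfolding c_def M_def using X by (simp add: cnt_eq)
  have s1: "cz \<le> s" unfolding cz_def s_def by (rule card_mono) auto
  have "{N\<in>{..<Suc M}. goodz z N} \<subseteq> insert 0 {N\<in>{1..M}. goodz z N}" by auto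
  then have "s \<le> card (insert 0 {N\<in>{1..M}. goodz z N})" unfolding s_def by (intro card_mono) auto
  also have "\<dots> \<le> cz + 1" unfolding cz_def using card_insert_le_m1 by (simp add: card_insert_if)
  finally have s2: "s \<le> cz + 1" .
  have b1: "\<bar>real s - real (Suc M) * F z\<bar> \<le> real (Qz z)" unfolding s_def by (rule goodz_count_bound)
  have b2: "\<bar>real (Suc M) * F z - X * F z\<bar> \<le> 1"
  proof -
    have "\<bar>real (Suc M) * F z - X * F z\<bar> = \<bar>real (Suc M) - X\<bar> * F z"
      using F_nonneg[of z] by (simp add: abs_mult left_diff_distrib[symmetric])
    also have "\<dots> \<le> 1 * 1" using MX F_le1[of z] F_nonneg[of z] by (intro mult_mono) auto
    finally show ?thesis by simp
  qed
  have b3: "\<bar>X * F z - X * prodinf f\<bar> \<le> X * (real K / real z)"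
  proof -
    have "\<bar>X * F z - X * prodinf f\<bar> = X * \<bar>prodinf f - F z\<bar>"
      using X by (simp add: abs_mult right_diff_distrib[symmetric] abs_minus_commute)
    also have "\<dots> \<le> X * (real K / real z)" using P_close[OF z] X by (intro mult_left_mono) auto
    finally show ?thesis .
  qed
  have b4: "real cz - real c \<le> real K * real M / real z + real K * sqrt (real (B*M + D))"
    unfolding cz_def c_def by (rule tail_count[OF z])
  have b5: "c \<le> cz" unfolding c_def cz_def good_def goodz_def by (rule card_mono) auto
  have b6: "real K * real M / real z \<le> real K * X / real z"
    using MX by (intro divide_right_mono mult_left_mono) auto
  have b7: "sqrt (real (B*M + D)) \<le> sqrt (real B * X + real D)"
    using MX by (simp add: mult_left_mono)
  have b8: "real K * sqrt (real (B*M + D)) \<le> real K * sqrt (real B * X + real D)"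
    using b7 by (intro mult_left_mono) auto
  have q1: "X * (real K / real z) = real K * X / real z" by simp
  have q2: "2 * real K * X / real z = 2 * (real K * X / real z)" by simp
  have q3: "prodinf f * X = X * prodinf f" by simp
  have r1: "real cz \<le> real s" "real s \<le> real cz + 1" "real c \<le> real cz" using s1 s2 b5 by simp_all
  show ?thesis unfolding cc q2 q3 using r1 b1 b2 b3 q1 b4 b6 b8 unfolding abs_le_iff by linarith
qed

end



context sieve begin

theorem asymp: "\<exists>C. \<forall>X::real. X \<ge> 3 \<longrightarrow> \<bar>real (cnt X) - prodinf f * X\<bar> \<le> C * (X / sqrt (ln X))"
proof -
  have ev: "eventually (\<lambda>X::real. (exp (sqrt (ln X) * ln (ln X)) \<le> X / sqrt (ln X) \<and> sqrt X * sqrt (ln X) \<le> X)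
     \<and> (real P0 + 2 \<le> sqrt (ln X) \<and> 2 * sqrt (ln X) \<le> X)) at_top"
    by (intro eventually_conj; real_asymp)
  then obtain X0 where X0: "\<And>X. X \<ge> X0 \<Longrightarrow> (exp (sqrt (ln X) * ln (ln X)) \<le> X / sqrt (ln X) \<and> sqrt X * sqrt (ln X) \<le> X)
     \<and> (real P0 + 2 \<le> sqrt (ln X) \<and> 2 * sqrt (ln X) \<le> X)"
    by (auto simp: eventually_at_top_linorder)
  define X1 where "X1 = max X0 3"
  define C1 where "C1 = 2 + 4 * real K + real K * sqrt (real B + real D)"
  define C2 where "C2 = 2 * sqrt (ln X1)"
  show ?thesis
  proof (intro exI[of _ "max C1 C2"] allI impI)
    fix X :: real assume X3: "3 \<le> X"
    define s where "s = sqrt (ln X)"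
    have lnpos: "0 < ln X" using X3 by simp
    have spos: "0 < s" unfolding s_def using lnpos by simp
    have Xs: "0 < X / s" using X3 spos by simp
    show "\<bar>real (cnt X) - prodinf f * X\<bar> \<le> max C1 C2 * (X / sqrt (ln X))"
    proof (cases "X1 \<le> X")
      case True
      then have "X0 \<le> X" unfolding X1_def by simp
      note H = X0[OF this, folded s_def]
      have e1: "exp (s * ln (ln X)) \<le> X / s" and e2: "sqrt X * s \<le> X"
        and e3: "real P0 + 2 \<le> s" and e4: "2 * s \<le> X" using H by auto
      define z where "z = nat \<lfloor>s\<rfloor>"
      have hz1: "real z \<le> s" unfolding z_def using spos by (simp add: of_nat_floor)
      have hz2: "s - 1 < real z" unfolding z_def using spos by linarith
      have hz3: "max P0 1 \<le> z" using hz2 e3 by simp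
      have z1: "1 \<le> z" using hz3 by simp
      have hz4: "s / 2 \<le> real z" using hz2 e3 by simp
      have zpos: "0 < real z" using z1 by simp
      have Q1: "real (Qz z) \<le> real z ^ (2*z)" using Qz_le[OF z1] .
      have a1: "real z ^ (2*z) = exp (real (2*z) * ln (real z))"
        using zpos by (simp add: powr_realpow[symmetric] powr_def)
      have a2: "real (2*z) * ln (real z) \<le> (2 * s) * ln s"
        using hz1 zpos z1 spos by (intro mult_mono) auto
      have a3: "(2 * s) * ln s = s * ln (ln X)"
        unfolding s_def using lnpos by (simp add: ln_sqrt)
      have a4: "exp (real (2*z) * ln (real z)) \<le> exp (s * ln (ln X))" using a2 a3 by simp
      have Q2: "real (Qz z) \<le> X / s" using Q1 a1 a4 e1 by linarith
      have MB: "\<bar>real (cnt X) - prodinf f * X\<bar> \<le> 2 + real (Qz z) + 2 * real K * X / real z + real K * sqrt (real B * X + real D)"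
        using main_bound[OF _ hz3] X3 by simp
      have t1: "2 \<le> X / s" using e4 spos by (simp add: field_simps)
      have t2: "2 * real K * X / real z \<le> 4 * real K * (X / s)"
      proof -
        have "X / real z \<le> X / (s / 2)" using hz4 spos X3 by (intro divide_left_mono) auto
        moreover have "X / (s / 2) = 2 * (X / s)" by simp
        ultimately have "X / real z \<le> 2 * (X / s)" by (rule ord_le_eq_trans)
        then have "2 * real K * (X / real z) \<le> 2 * real K * (2 * (X / s))" by (intro mult_left_mono) auto
        then show ?thesis by simp
      qed
      have t3: "real K * sqrt (real B * X + real D) \<le> real K * sqrt (real B + real D) * (X / s)"
      proof -
        have "real D * 1 \<le> real D * X" using X3 by (intro mult_left_mono) auto
        then have "real B * X + real D \<le> (real B + real D) * X" by (simp add: algebra_simps)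
        then have "sqrt (real B * X + real D) \<le> sqrt (real B + real D) * sqrt X"
          by (simp add: real_sqrt_mult[symmetric])
        also have "sqrt X \<le> X / s" using e2 spos by (simp add: field_simps)
        then have "sqrt (real B + real D) * sqrt X \<le> sqrt (real B + real D) * (X / s)"
          by (intro mult_left_mono) auto
        finally have hh: "sqrt (real B * X + real D) \<le> sqrt (real B + real D) * (X / s)" .
        have "real K * sqrt (real B * X + real D) \<le> real K * (sqrt (real B + real D) * (X / s))"
          using hh by (intro mult_left_mono) auto
        then show ?thesis by (simp add: mult.assoc)
      qed
      have "\<bar>real (cnt X) - prodinf f * X\<bar> \<le> C1 * (X / s)"
        using MB Q2 t1 t2 t3 unfolding C1_def by (simp add: algebra_simps)
      also have "\<dots> \<le> max C1 C2 * (X / s)" using Xs by (intro mult_right_mono) auto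
      finally show ?thesis unfolding s_def .
    next
      case False
      have c0: "0 \<le> real (cnt X)" by simp
      have c1: "real (cnt X) \<le> X" using cnt_le X3 by simp
      have p: "0 \<le> prodinf f * X" "prodinf f * X \<le> X" using P_nonneg P_le1 X3
        by (simp_all add: mult_left_le_one_le)
      have "\<bar>real (cnt X) - prodinf f * X\<bar> \<le> 2 * X" using c0 c1 p by (simp add: abs_le_iff)
      also have "2 * X = 2 * s * (X / s)" using spos by simp
      also have "2 * s \<le> C2" unfolding C2_def s_def using False X3 by simp
      then have "2 * s * (X / s) \<le> C2 * (X / s)" using Xs by (intro mult_right_mono) auto
      also have "\<dots> \<le> max C1 C2 * (X / s)" using Xs by (intro mult_right_mono) auto
      finally show ?thesis unfolding s_def .
    qed
  qed
qed

end



definition GS :: "nat \<Rightarrow> nat set \<Rightarrow> nat \<Rightarrow> nat set" where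
  "GS b S p = {n\<in>{..<p^2}. \<not> (p^2 dvd n \<or> (\<exists>d\<in>S. p^2 dvd (b*n + d)))}"

definition cntS :: "nat \<Rightarrow> nat set \<Rightarrow> real \<Rightarrow> nat" where
  "cntS b S X = card {N::nat. 1 \<le> N \<and> real N \<le> X \<and> squarefree N \<and> (\<forall>d\<in>S. squarefree (b*N+d))}"

lemma mod_dvd_lin: "(m::nat) dvd (b*(N mod m) + d) \<longleftrightarrow> m dvd (b*N + d)"
proof -
  have "(b*(N mod m) + d) mod m = (b*N + d) mod m" by (metis mod_add_left_eq mod_mult_right_eq)
  then show ?thesis by (simp add: dvd_eq_mod_eq_0)
qed

lemma small_dvd_zero: "(n::nat) < m \<Longrightarrow> m dvd n \<Longrightarrow> n = 0"
  by (metis dvd_imp_le gr0I leD)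

lemma coprime_small: fixes p b :: nat assumes "prime p" "b < p" "0 < b" shows "coprime b (p^2)"
proof -
  have "\<not> p dvd b" using assms by (auto dest: dvd_imp_le)
  then have "coprime p b" using assms(1) by (simp add: prime_imp_coprime)
  then show ?thesis by (simp add: coprime_commute)
qed

lemma uniq_root:
  fixes p b x y d :: nat
  assumes "prime p" "b < p" "0 < b" "x < p^2" "y < p^2" "p^2 dvd (b*x + d)" "p^2 dvd (b*y+d)"
  shows "x = y"
proof -
  have cop: "coprime b (p^2)" using coprime_small assms by blast
  have "[b*x + d = b*y + d] (mod p^2)" using assms(6,7) by (simp add: cong_def dvd_eq_mod_eq_0)
  then have "[b*x = b*y] (mod p^2)" by (simp add: cong_add_rcancel_nat)
  then have "[x = y] (mod p^2)" using cop by (simp add: cong_mult_lcancel_nat)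
  then show ?thesis using assms(4,5) by (simp add: cong_def)
qed

lemma GS_sieve:
  assumes b: "b \<ge> 2" and S: "S \<subseteq> {..<b}"
  shows "sieve (GS b S) (1 + b) b b b"
proof
  fix p :: nat assume "prime p" show "GS b S p \<subseteq> {..<p^2}" unfolding GS_def by auto
next
  fix p :: nat assume p: "prime p" "b < p"
  define U where "U = (\<lambda>d. {n\<in>{..<p^2}. p^2 dvd (b*n+d)})"
  have sub: "{..<p^2} - GS b S p \<subseteq> {0} \<union> (\<Union>d\<in>S. U d)"
    unfolding GS_def U_def using small_dvd_zero by auto
  have finS: "finite S" using S finite_subset by blast
  have U1: "card (U d) \<le> 1" for d
  proof -
    have "finite (U d)" unfolding U_def by auto
    moreover have "\<forall>x\<in>U d. \<forall>y\<in>U d. x = y"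
      unfolding U_def using uniq_root[OF p(1) p(2)] b by auto
    ultimately show ?thesis using card_le_Suc0_iff_eq by auto
  qed
  have "card ({..<p^2} - GS b S p) \<le> card ({0} \<union> (\<Union>d\<in>S. U d))"
    by (rule card_mono[OF _ sub]) (use finS in \<open>auto simp: U_def\<close>)
  also have "\<dots> \<le> card {0::nat} + card (\<Union>d\<in>S. U d)" by (rule card_Un_le)
  also have "card (\<Union>d\<in>S. U d) \<le> (\<Sum>d\<in>S. card (U d))" by (rule card_UN_le[OF finS])
  also have "(\<Sum>d\<in>S. card (U d)) \<le> (\<Sum>d\<in>S. 1)" by (rule sum_mono) (rule U1)
  also have "(\<Sum>d\<in>S. (1::nat)) \<le> b" using card_mono[OF _ S] by simp
  finally show "card ({..<p^2} - GS b S p) \<le> 1 + b" by simp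
next
  fix p N :: nat assume p: "prime p" "b < p" "1 \<le> N" "N mod p^2 \<notin> GS b S p"
  have pp: "0 < p^2" using p prime_gt_0_nat by simp
  have "p^2 dvd N \<or> (\<exists>d\<in>S. p^2 dvd (b*N + d))"
    using p(4) pp unfolding GS_def by (auto simp: mod_dvd_lin dvd_mod_iff)
  then show "p^2 \<le> b*N + b"
  proof
    assume "p^2 dvd N"
    then have "p^2 \<le> N" using p(3) by (simp add: dvd_imp_le)
    also have "N \<le> b*N" using b by simp
    finally show ?thesis by simp
  next
    assume "\<exists>d\<in>S. p^2 dvd (b*N + d)"
    then obtain d where d: "d \<in> S" "p^2 dvd (b*N + d)" by auto
    then have "p^2 \<le> b*N + d" using p(3) b by (intro dvd_imp_le) auto
    also have "d \<le> b" using d S by auto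
    finally show ?thesis by simp
  qed
qed

lemma dead_asymp_S:
  assumes b: "b \<ge> 2" and S: "S \<subseteq> {..<b}"
  shows "convergent_prod (dead_factor b S) \<and>
    (\<exists>C. \<forall>X::real. X \<ge> 3 \<longrightarrow> \<bar>real (cntS b S X) - prodinf (dead_factor b S) * X\<bar> \<le> C * (X / sqrt (ln X)))"
proof -
  interpret sieve "GS b S" "1 + b" b b b by (rule GS_sieve[OF b S])
  have fe: "f = dead_factor b S"
  proof
    fix p show "f p = dead_factor b S p"
    proof (cases "prime p")
      case True
      define Bd where "Bd = {n\<in>{..<p^2}. p^2 dvd n \<or> (\<exists>d\<in>S. p^2 dvd (b*n + d))}"
      have gs: "GS b S p = {..<p^2} - Bd" unfolding GS_def Bd_def by auto
      have nu: "nu p b S = card Bd" unfolding nu_def Bd_def by simp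
      have bsub: "Bd \<subseteq> {..<p^2}" unfolding Bd_def by auto
      have cb: "card Bd \<le> p^2" using card_mono[OF _ bsub] by simp
      have cg: "card (GS b S p) = p^2 - card Bd" unfolding gs
        using card_Diff_subset[OF finite_subset[OF bsub] bsub] by simp
      have pp: "0 < real p ^ 2" using True prime_gt_0_nat by simp
      show ?thesis using True cg nu cb pp unfolding f_def dead_factor_def
        by (simp add: of_nat_diff field_simps)
    qed (simp add: f_def dead_factor_def)
  qed
  have good_iff: "good N \<longleftrightarrow> squarefree N \<and> (\<forall>d\<in>S. squarefree (b*N+d))" if N: "1 \<le> N" for N
  proof -
    have nz: "N \<noteq> 0" "\<And>d. b*N + d \<noteq> 0" using N b by auto
    have "good N \<longleftrightarrow> (\<forall>p. prime p \<longrightarrow> \<not> p^2 dvd N \<and> (\<forall>d\<in>S. \<not> p^2 dvd (b*N+d)))"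
      unfolding good_def GS_def using prime_gt_0_nat
      by (auto simp: mod_dvd_lin dvd_mod_iff)
    also have "\<dots> \<longleftrightarrow> squarefree N \<and> (\<forall>d\<in>S. squarefree (b*N+d))"
      using nz by (auto simp: squarefree_factorial_semiring)
    finally show ?thesis .
  qed
  have ce: "cnt X = cntS b S X" for X
    unfolding cnt_def cntS_def by (rule arg_cong[where f=card]) (use good_iff in auto)
  show ?thesis using conv asymp unfolding fe ce by blast
qed

lemma prod_ind: "finite S \<Longrightarrow> (\<Prod>d\<in>S. if P d then (1::real) else 0) = (if \<forall>d\<in>S. P d then 1 else 0)"
  by (induction S rule: finite_induct) auto

lemma prod_one_minus:
  fixes a :: "nat \<Rightarrow> real"
  assumes "finite A"
  shows "(\<Prod>d\<in>A. 1 - a d) = (\<Sum>S\<in>Pow A. (-1)^card S * (\<Prod>d\<in>S. a d))"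
proof -
  have "(\<Prod>d\<in>A. 1 - a d) = (\<Prod>d\<in>A. (- a d) + 1)" by simp
  also have "\<dots> = (\<Sum>S\<in>Pow A. (\<Prod>d\<in>S. - a d) * (\<Prod>d\<in>A - S. 1))" by (rule prod_add[OF assms])
  also have "\<dots> = (\<Sum>S\<in>Pow A. (-1)^card S * (\<Prod>d\<in>S. a d))"
  proof (rule sum.cong)
    fix S assume "S \<in> Pow A"
    have "(\<Prod>d\<in>S. - a d) = (\<Prod>d\<in>S. (-1) * a d)" by simp
    also have "\<dots> = (\<Prod>d\<in>S. -1) * (\<Prod>d\<in>S. a d)" by (rule prod.distrib)
    finally show "(\<Prod>d\<in>S. - a d) * (\<Prod>d\<in>A - S. 1) = (-1)^card S * (\<Prod>d\<in>S. a d)" by simp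
  qed simp
  finally show ?thesis .
qed

lemma incl_excl:
  "real (D_count b X) = (\<Sum>S\<in>Pow {..<b}. (-1)^card S * real (cntS b S X))"
proof -
  define A where "A = {N::nat. 1 \<le> N \<and> real N \<le> X}"
  have finA: "finite A"
  proof (rule finite_subset)
    show "A \<subseteq> {..nat \<lfloor>X\<rfloor>}" unfolding A_def using le_nat_floor by auto
  qed simp
  define ind where "ind = (\<lambda>P::bool. if P then (1::real) else 0)"
  have card_ind: "real (card {N\<in>A. P N}) = (\<Sum>N\<in>A. ind (P N))" for P
    unfolding ind_def by (simp add: sum.inter_filter[symmetric] finA)
  have pt: "ind (dead_end b N) = (\<Sum>S\<in>Pow {..<b}. (-1)^card S * ind (squarefree N \<and> (\<forall>d\<in>S. squarefree (b*N+d))))" for N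
  proof -
    have "ind (dead_end b N) = ind (squarefree N) * (\<Prod>d\<in>{..<b}. 1 - ind (squarefree (b*N+d)))"
    proof -
      have "(\<Prod>d\<in>{..<b}. 1 - ind (squarefree (b*N+d))) = (\<Prod>d\<in>{..<b}. ind (\<not> squarefree (b*N+d)))"
        unfolding ind_def by (rule prod.cong) auto
      also have "\<dots> = ind (\<forall>d\<in>{..<b}. \<not> squarefree (b*N+d))"
        unfolding ind_def by (rule prod_ind) simp
      finally show ?thesis unfolding dead_end_def ind_def by auto
    qed
    also have "\<dots> = ind (squarefree N) * (\<Sum>S\<in>Pow {..<b}. (-1)^card S * (\<Prod>d\<in>S. ind (squarefree (b*N+d))))"
      by (subst prod_one_minus) simp_all
    also have "\<dots> = (\<Sum>S\<in>Pow {..<b}. (-1)^card S * ind (squarefree N \<and> (\<forall>d\<in>S. squarefree (b*N+d))))"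
      unfolding sum_distrib_left
    proof (rule sum.cong)
      fix S assume "S \<in> Pow {..<b}"
      then have "finite S" using finite_subset by auto
      then have "(\<Prod>d\<in>S. ind (squarefree (b*N+d))) = ind (\<forall>d\<in>S. squarefree (b*N+d))"
        unfolding ind_def by (rule prod_ind)
      then show "ind (squarefree N) * ((-1)^card S * (\<Prod>d\<in>S. ind (squarefree (b*N+d))))
          = (-1)^card S * ind (squarefree N \<and> (\<forall>d\<in>S. squarefree (b*N+d)))"
        unfolding ind_def by auto
    qed simp
    finally show ?thesis .
  qed
  have "D_count b X = card {N\<in>A. dead_end b N}"
    unfolding D_count_def A_def by (rule arg_cong[where f=card]) auto
  then have "real (D_count b X) = (\<Sum>N\<in>A. ind (dead_end b N))" using card_ind by simp
  also have "\<dots> = (\<Sum>N\<in>A. \<Sum>S\<in>Pow {..<b}. (-1)^card S * ind (squarefree N \<and> (\<forall>d\<in>S. squarefree (b*N+d))))"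
    using pt by simp
  also have "\<dots> = (\<Sum>S\<in>Pow {..<b}. \<Sum>N\<in>A. (-1)^card S * ind (squarefree N \<and> (\<forall>d\<in>S. squarefree (b*N+d))))"
    by (rule sum.swap)
  also have "\<dots> = (\<Sum>S\<in>Pow {..<b}. (-1)^card S * real (cntS b S X))"
  proof (rule sum.cong)
    fix S assume "S \<in> Pow {..<b}"
    have "cntS b S X = card {N\<in>A. squarefree N \<and> (\<forall>d\<in>S. squarefree (b*N+d))}"
      unfolding cntS_def A_def by (rule arg_cong[where f=card]) auto
    then show "(\<Sum>N\<in>A. (-1)^card S * ind (squarefree N \<and> (\<forall>d\<in>S. squarefree (b*N+d))))
        = (-1)^card S * real (cntS b S X)"
      using card_ind by (simp add: sum_distrib_left[symmetric])
  qed simp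
  finally show ?thesis .
qed



lemma uniq_cong:
  fixes p b x y d :: nat
  assumes "prime p" "b < p" "0 < b" "x < p^2" "y < p^2" "(b*x + d) mod p^2 = (b*y + d) mod p^2"
  shows "x = y"
proof -
  have cop: "coprime b (p^2)" using coprime_small assms by blast
  have "[b*x + d = b*y + d] (mod p^2)" using assms(6) by (simp add: cong_def)
  then have "[b*x = b*y] (mod p^2)" by (simp add: cong_add_rcancel_nat)
  then have "[x = y] (mod p^2)" using cop by (simp add: cong_mult_lcancel_nat)
  then show ?thesis using assms(4,5) by (simp add: cong_def)
qed

lemma exists_root:
  fixes p b d :: nat
  assumes "prime p" "b < p" "0 < b"
  shows "\<exists>r. r < p^2 \<and> p^2 dvd (b*r + d)"
proof -
  define g where "g = (\<lambda>n. (b*n + d) mod p^2)"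
  have pp: "0 < p^2" using assms prime_gt_0_nat by simp
  have "inj_on g {..<p^2}" unfolding g_def
    by (rule inj_onI) (use uniq_cong[OF assms] in auto)
  moreover have "g ` {..<p^2} \<subseteq> {..<p^2}" unfolding g_def using pp by auto
  ultimately have "g ` {..<p^2} = {..<p^2}" by (intro endo_inj_surj) auto
  then have "0 \<in> g ` {..<p^2}" using pp by auto
  then obtain r where "r < p^2" "g r = 0" by auto
  then show ?thesis unfolding g_def by (auto simp: dvd_eq_mod_eq_0)
qed

lemma dead_lower:
  assumes b: "b \<ge> 2"
  shows "\<exists>P'>0. \<exists>C'. \<forall>X::real. X \<ge> 3 \<longrightarrow> P' * X - C' * (X / sqrt (ln X)) \<le> real (D_count b X)"
proof -
  obtain q0 where q0: "prime q0" "q0 dvd b" using prime_factor_nat[of b] b by auto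
  have q0b: "q0 \<le> b" using q0 b by (simp add: dvd_imp_le)
  have q02: "2 \<le> q0" using q0 prime_ge_2_nat by blast
  have "{p::nat. prime p \<and> b < p} = {p. prime p} - {..b}" by auto
  then have inf: "infinite {p::nat. prime p \<and> b < p}" using primes_infinite by simp
  obtain Bs where Bs: "finite Bs" "card Bs = b - 1" "Bs \<subseteq> {p. prime p \<and> b < p}"
    using infinite_arbitrarily_large[OF inf] by blast
  obtain h where h: "bij_betw h {1..<b} Bs"
    using finite_same_card_bij[of "{1..<b}" Bs] Bs by auto
  define dd where "dd = (\<lambda>p. inv_into {1..<b} h p)"
  have img: "h ` {1..<b} = Bs" using h by (simp add: bij_betw_def)
  have dd1: "p \<in> Bs \<Longrightarrow> dd p \<in> {1..<b} \<and> h (dd p) = p" for p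
  proof
    assume pB: "p \<in> Bs"
    then have "p \<in> h ` {1..<b}" using img by simp
    then show "dd p \<in> {1..<b}" unfolding dd_def by (rule inv_into_into)
    show "h (dd p) = p" unfolding dd_def using bij_betw_inv_into_right[OF h pB] .
  qed
  have dd2: "d \<in> {1..<b} \<Longrightarrow> h d \<in> Bs \<and> dd (h d) = d" for d
    unfolding dd_def using h bij_betw_inv_into_left[OF h] by (auto simp: bij_betw_def)
  define r where "r = (\<lambda>p. SOME r. r < p^2 \<and> p^2 dvd (b*r + dd p))"
  have r: "p \<in> Bs \<Longrightarrow> r p < p^2 \<and> p^2 dvd (b * r p + dd p)" for p
  proof -
    assume "p \<in> Bs"
    then have "prime p" "b < p" using Bs by auto
    then have "\<exists>r. r < p^2 \<and> p^2 dvd (b*r + dd p)" using exists_root b by simp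
    then show ?thesis unfolding r_def by (rule someI_ex)
  qed
  define G' where "G' = (\<lambda>p. if p = q0 then {q0} else if p \<in> Bs then {r p} else {n\<in>{..<p^2}. n \<noteq> 0})"
  define P0 where "P0 = Max (insert q0 Bs)"
  have P0: "P0 < p \<Longrightarrow> p \<noteq> q0 \<and> p \<notin> Bs" for p
  proof -
    assume a: "P0 < p"
    have "\<forall>x\<in>insert q0 Bs. x \<le> P0" unfolding P0_def using Bs(1) by simp
    then show ?thesis using a by auto
  qed
  have G'q: "G' q0 = {q0}" unfolding G'_def by (rule if_P) (rule refl)
  have G'B: "G' p = {r p}" if a: "p \<in> Bs" "p \<noteq> q0" for p
    unfolding G'_def by (rule trans[OF if_not_P[OF a(2)] if_P[OF a(1)]])
  have G'o: "G' p = {n\<in>{..<p^2}. n \<noteq> 0}" if a: "p \<notin> Bs" "p \<noteq> q0" for p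
    unfolding G'_def by (rule trans[OF if_not_P[OF a(2)] if_not_P[OF a(1)]])
  have sv: "sieve G' 1 P0 1 0"
  proof
    fix p :: nat assume p: "prime p"
    have qq: "q0 < q0^2"
    proof -
      have "q0 * 1 < q0 * q0" using q02 by (intro mult_strict_left_mono) auto
      then show ?thesis by (simp add: power2_eq_square)
    qed
    show "G' p \<subseteq> {..<p^2}"
    proof
      fix n assume n: "n \<in> G' p"
      show "n \<in> {..<p^2}"
      proof (cases "p = q0")
        case True
        then have "n = q0" using n unfolding G'_def by simp
        then show ?thesis using qq True by simp
      next
        case False
        show ?thesis
        proof (cases "p \<in> Bs")
          case True
          then have "n = r p" using n False unfolding G'_def by simp
          then show ?thesis using r[OF True] by simp
        next
          case False2: False
          then show ?thesis using n False unfolding G'_def by simp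
        qed
      qed
    qed
  next
    fix p :: nat assume p: "prime p" "P0 < p"
    have "p \<noteq> q0" "p \<notin> Bs" using P0[OF p(2)] by auto
    have Gp: "G' p = {n\<in>{..<p^2}. n \<noteq> 0}" unfolding G'_def
      by (rule trans[OF if_not_P[OF \<open>p \<noteq> q0\<close>] if_not_P[OF \<open>p \<notin> Bs\<close>]])
    have "{..<p^2} - G' p \<subseteq> {0}"
    proof
      fix n assume "n \<in> {..<p^2} - G' p"
      then have "n < p^2" "n \<notin> G' p" by auto
      then show "n \<in> {0}" unfolding Gp by simp
    qed
    then have "card ({..<p^2} - G' p) \<le> card {0::nat}" by (intro card_mono) auto
    then show "card ({..<p^2} - G' p) \<le> 1" by simp
  next
    fix p N :: nat assume p: "prime p" "P0 < p" "1 \<le> N" "N mod p^2 \<notin> G' p"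
    have "p \<noteq> q0" "p \<notin> Bs" using P0[OF p(2)] by auto
    have Gp: "G' p = {n\<in>{..<p^2}. n \<noteq> 0}" unfolding G'_def
      by (rule trans[OF if_not_P[OF \<open>p \<noteq> q0\<close>] if_not_P[OF \<open>p \<notin> Bs\<close>]])
    have "0 < p^2" using p prime_gt_0_nat by simp
    then have "N mod p^2 < p^2" by simp
    then have "N mod p^2 = 0" using p(4) unfolding Gp by simp
    then have "p^2 dvd N" by (simp add: dvd_eq_mod_eq_0)
    then show "p^2 \<le> 1*N + 0" using p(3) by (simp add: dvd_imp_le)
  qed
  interpret sieve G' 1 P0 1 0 by (rule sv)
  have fnz: "f p \<noteq> 0" for p
  proof (cases "prime p")
    case True
    have "G' p \<noteq> {}"
    proof -
      have "2 \<le> p" using True prime_ge_2_nat by blast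
      have "2 * 2 \<le> p * p" using \<open>2 \<le> p\<close> by (intro mult_le_mono)
      then have "1 < p^2" by (simp add: power2_eq_square)
      show ?thesis
      proof (cases "p = q0")
        case True then show ?thesis using G'q by simp
      next
        case False
        show ?thesis
        proof (cases "p \<in> Bs")
          case True then show ?thesis using G'B False by simp
        next
          case False2: False
          have "1 \<in> G' p" using G'o[OF False2 False] \<open>1 < p^2\<close> by simp
          then show ?thesis by blast
        qed
      qed
    qed
    moreover have "finite (G' p)" using G_sub[OF True] finite_subset by blast
    ultimately have "card (G' p) \<noteq> 0" by simp
    then show ?thesis using True prime_gt_0_nat[of p] unfolding f_def by simp
  qed (simp add: f_def)
  have Ppos: "0 < prodinf f" using P_nonneg prodinf_nonzero[OF conv fnz] by linarith
  have sub: "good N \<Longrightarrow> 1 \<le> N \<Longrightarrow> dead_end b N" for N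
  proof -
    assume g: "good N" and N1: "1 \<le> N"
    have gp: "prime p \<Longrightarrow> N mod p^2 \<in> G' p" for p using g unfolding good_def by auto
    have sf: "squarefree N"
    proof -
      have "\<not> p^2 dvd N" if p: "prime p" for p
      proof
        assume dv: "p^2 dvd N"
        then have m0: "N mod p^2 = 0" by (simp add: dvd_eq_mod_eq_0)
        show False
        proof (cases "p = q0")
          case True then show False using gp[OF p] m0 q02 G'q by simp
        next
          case False
          show False
          proof (cases "p \<in> Bs")
            case True
            have "r p = 0" using gp[OF p] m0 G'B[OF True False] by simp
            then have A: "p^2 dvd dd p" using r[OF True] by simp
            have B: "0 < dd p" "dd p < b" using dd1[OF True] by auto
            have C: "b < p^2"
            proof -
              have "b < p" using True Bs by auto
              moreover have "p \<le> p * p" using prime_gt_0_nat[OF p] by simp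
              ultimately have "b < p * p" by (rule less_le_trans)
              then show ?thesis by (simp add: power2_eq_square)
            qed
            have "p^2 \<le> dd p" by (rule dvd_imp_le[OF A B(1)])
            then show False using B(2) C by linarith
          next
            case False2: False
            show False using gp[OF p] m0 G'o[OF False2 False] by simp
          qed
        qed
      qed
      then show ?thesis using N1 by (subst squarefree_factorial_semiring) auto
    qed
    have nsf: "\<not> squarefree (b*N + d)" if d: "d < b" for d
    proof (cases "d = 0")
      case True
      have m: "N mod q0^2 = q0" using gp[OF q0(1)] G'q by simp
      have qq: "q0 dvd q0^2" by (simp add: power2_eq_square)
      have "q0 dvd N mod q0^2" using m by simp
      then have qN: "q0 dvd N" using dvd_mod_iff[OF qq] by blast
      have "q0 * q0 dvd b * N" by (rule mult_dvd_mono[OF q0(2) qN])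
      then have "q0^2 dvd (b*N + d)" using True by (simp add: power2_eq_square)
      moreover have "\<not> q0 dvd 1" using q02 by simp
      ultimately show ?thesis by (rule not_squarefreeI)
    next
      case False
      have dI: "d \<in> {1..<b}" using d False by simp
      obtain p where p_eq: "p = h d" by simp
      have pB: "p \<in> Bs" using dd2[OF dI] p_eq by simp
      have ddp: "dd p = d" using dd2[OF dI] p_eq by simp
      have pprime: "prime p" using pB Bs(3) by blast
      have pb: "b < p" using pB Bs(3) by blast
      have pq: "p \<noteq> q0" using pb q0b by linarith
      have m: "N mod p^2 \<in> G' p" by (rule gp[OF pprime])
      have m2: "N mod p^2 = r p" using m unfolding G'B[OF pB pq] by simp
      have r2: "p^2 dvd (b * r p + d)" using r[OF pB] ddp by simp
      have "p^2 dvd (b*(N mod p^2) + d)" unfolding m2 by (rule r2)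
      then have "p^2 dvd (b*N + d)" unfolding mod_dvd_lin .
      moreover have "\<not> p dvd 1" using pb b by simp
      ultimately show ?thesis by (rule not_squarefreeI)
    qed
    show "dead_end b N" unfolding dead_end_def using sf nsf by auto
  qed
  have cle: "cnt X \<le> D_count b X" for X
  proof -
    have "{N::nat. 1 \<le> N \<and> real N \<le> X \<and> dead_end b N} \<subseteq> {..nat \<lfloor>X\<rfloor>}"
    proof
      fix N assume "N \<in> {N::nat. 1 \<le> N \<and> real N \<le> X \<and> dead_end b N}"
      then have "real N \<le> X" by simp
      then show "N \<in> {..nat \<lfloor>X\<rfloor>}" using le_nat_floor by simp
    qed
    then have fin: "finite {N::nat. 1 \<le> N \<and> real N \<le> X \<and> dead_end b N}"
      using finite_subset by blast
    show ?thesis unfolding cnt_def D_count_def by (rule card_mono[OF fin]) (use sub in auto)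
  qed
  obtain C' where C': "\<And>X::real. X \<ge> 3 \<Longrightarrow> \<bar>real (cnt X) - prodinf f * X\<bar> \<le> C' * (X / sqrt (ln X))"
    using asymp by blast
  have "\<forall>X::real. X \<ge> 3 \<longrightarrow> prodinf f * X - C' * (X / sqrt (ln X)) \<le> real (D_count b X)"
  proof (intro allI impI)
    fix X :: real assume X3: "X \<ge> 3"
    have "prodinf f * X - C' * (X / sqrt (ln X)) \<le> real (cnt X)"
      using C'[OF X3] unfolding abs_le_iff by linarith
    also have "\<dots> \<le> real (D_count b X)" using cle by simp
    finally show "prodinf f * X - C' * (X / sqrt (ln X)) \<le> real (D_count b X)" .
  qed
  then show ?thesis using Ppos by blast
qed



theorem theorem1p2:
  fixes b :: nat
  assumes "b \<ge> 2"
  shows "(\<forall>S \<subseteq> {..<b}. convergent_prod (dead_factor b S))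
    \<and> c_dead b > 0
    \<and> (\<exists>C. \<forall>X::real. X \<ge> 3 \<longrightarrow>
          \<bar>real (D_count b X) - c_dead b * X\<bar> \<le> C * (X / sqrt (ln X)))"
proof -
  have conv: "\<forall>S \<subseteq> {..<b}. convergent_prod (dead_factor b S)" using dead_asymp_S assms by blast
  have "\<forall>S\<in>Pow {..<b}. \<exists>C. \<forall>X::real. X \<ge> 3 \<longrightarrow>
      \<bar>real (cntS b S X) - prodinf (dead_factor b S) * X\<bar> \<le> C * (X / sqrt (ln X))"
    using dead_asymp_S assms by blast
  then obtain CS where CS: "\<And>S X. S \<in> Pow {..<b} \<Longrightarrow> (X::real) \<ge> 3 \<Longrightarrow>
      \<bar>real (cntS b S X) - prodinf (dead_factor b S) * X\<bar> \<le> CS S * (X / sqrt (ln X))"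
    by metis
  define C where "C = (\<Sum>S\<in>Pow {..<b}. CS S)"
  have asym: "\<bar>real (D_count b X) - c_dead b * X\<bar> \<le> C * (X / sqrt (ln X))" if X: "(X::real) \<ge> 3" for X
  proof -
    have "real (D_count b X) - c_dead b * X
        = (\<Sum>S\<in>Pow {..<b}. (-1)^card S * (real (cntS b S X) - prodinf (dead_factor b S) * X))"
      unfolding incl_excl c_dead_def
      by (simp add: sum_distrib_right sum_subtractf right_diff_distrib mult.assoc)
    then have "\<bar>real (D_count b X) - c_dead b * X\<bar>
        \<le> (\<Sum>S\<in>Pow {..<b}. \<bar>(-1)^card S * (real (cntS b S X) - prodinf (dead_factor b S) * X)\<bar>)"
      by (simp only: sum_abs)
    also have "\<dots> = (\<Sum>S\<in>Pow {..<b}. \<bar>real (cntS b S X) - prodinf (dead_factor b S) * X\<bar>)"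
      by (simp add: abs_mult)
    also have "\<dots> \<le> (\<Sum>S\<in>Pow {..<b}. CS S * (X / sqrt (ln X)))"
      by (rule sum_mono) (use CS X in auto)
    also have "\<dots> = C * (X / sqrt (ln X))" unfolding C_def by (simp only: sum_distrib_right)
    finally show ?thesis .
  qed
  obtain P' C' where P': "P' > 0" and C': "\<And>X::real. X \<ge> 3 \<Longrightarrow> P' * X - C' * (X / sqrt (ln X)) \<le> real (D_count b X)"
    using dead_lower[OF assms] by blast
  define A where "A = \<bar>C\<bar> + \<bar>C'\<bar>"
  define L where "L = max 3 ((2 * A / P')^2 + 1)"
  define X where "X = exp L"
  have L3: "3 \<le> L" unfolding L_def by simp
  have X3: "3 \<le> X" unfolding X_def using exp_ge_add_one_self[of L] L3 by linarith
  have lnX: "ln X = L" unfolding X_def by simp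
  define s where "s = sqrt L"
  have spos: "0 < s" unfolding s_def using L3 by simp
  have Xpos: "0 < X" unfolding X_def by simp
  have s_ge: "2 * A / P' \<le> s" unfolding s_def by (rule real_le_rsqrt) (simp add: L_def)
  have A0: "0 \<le> A" unfolding A_def by simp
  have "P' * X - C' * (X / s) \<le> real (D_count b X)" using C'[OF X3] unfolding lnX s_def .
  moreover have "real (D_count b X) \<le> c_dead b * X + C * (X / s)"
    using asym[OF X3] unfolding lnX s_def[symmetric] by (simp add: abs_le_iff)
  moreover have "(C + C') * (X / s) = C * (X / s) + C' * (X / s)" by (rule distrib_right)
  moreover have "X * (P' - c_dead b) = P' * X - c_dead b * X" by (simp add: algebra_simps)
  ultimately have "X * (P' - c_dead b) \<le> (C + C') * (X / s)" by linarith
  also have "(C + C') * (X / s) \<le> A * (X / s)" unfolding A_def using Xpos spos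
    by (intro mult_right_mono) auto
  also have "A * (X / s) = X * (A / s)" by simp
  finally have h: "X * (P' - c_dead b) \<le> X * (A / s)" .
  have "P' - c_dead b \<le> A / s" using h Xpos by (rule mult_left_le_imp_le)
  moreover have "A / s \<le> P' / 2"
  proof -
    have "2 * A \<le> s * P'" using s_ge P' by (simp add: divide_le_eq)
    then show ?thesis using spos by (simp add: divide_le_eq field_simps)
  qed
  ultimately have "P' / 2 \<le> c_dead b" by linarith
  then have "c_dead b > 0" using P' by linarith
  then show ?thesis using conv asym by blast
qed

end
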